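(* Let $G$ be a graph on $n$ vertices and $1\le k\le n-1$. Suppose that $F_k(G)$ is uniquely reconstructible as the $k$-token graph of $G$. Then $\operatorname{Aut}(F_k(G))\simeq \operatorname{Aut}(G)\times\mathbb{Z}_2$ if $k=n/2$ and $n\ge 4$, and $\operatorname{Aut}(F_k(G))\simeq\operatorname{Aut}(G)$ otherwise.
   Context: $F_k(G)$ is the graph on the $k$-subsets of $V(G)$ in which $A,B$ are adjacent iff $A\triangle B$ is an edge of $G$. For $\psi$ an isomorphism between graphs $H\to G$, $\iota(\psi)$ maps a $k$-subset $A$ of $V(H)$ to $\{\psi(v):v\in A\}$. Let $\mathfrak{c}$ send each $k$-subset $A$ of $V(G)$ to $V(G)\setminus A$. A $k$-token reconstruction of a graph $F$ is a pair $(G',\varphi)$ with $\varphi$ an isomorphism $F\to F_k(G')$. Two $k$-token reconstructions $(G,\varphi),(G,\psi)$ of $F$ are equivalent if there is $s\in\operatorname{Aut}(G)$ with $\psi=\iota(s)\circ\varphi$ or $\psi=\mathfrak{c}\circ\iota(s)\circ\varphi$. $F$ is uniquely reconstructible as the $k$-token graph of $G$ if any two $k$-token reconstructions of $F$ of the form $(G,\cdot)$ are equivalent. *)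

theory Defs
  imports "HOL-Algebra.Algebra"
begin

type_synonym 'a graph = "'a set \<times> 'a set set"

definition simple_graph :: "'a graph \<Rightarrow> bool" where
  "simple_graph G \<longleftrightarrow> finite (fst G) \<and> (\<forall>e\<in>snd G. e \<subseteq> fst G \<and> card e = 2)"

definition graph_iso :: "'a graph \<Rightarrow> 'b graph \<Rightarrow> ('a \<Rightarrow> 'b) \<Rightarrow> bool" where
  "graph_iso H G f \<longleftrightarrow> bij_betw f (fst H) (fst G) \<and>
     (\<forall>u\<in>fst H. \<forall>v\<in>fst H. {u, v} \<in> snd H \<longleftrightarrow> {f u, f v} \<in> snd G)"

definition token_graph :: "nat \<Rightarrow> 'a graph \<Rightarrow> 'a set graph" where
  "token_graph k G =
     ({A. A \<subseteq> fst G \<and> card A = k},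
      {{A, B} | A B. A \<subseteq> fst G \<and> card A = k \<and> B \<subseteq> fst G \<and> card B = k
                   \<and> (A - B) \<union> (B - A) \<in> snd G})"

definition iota :: "('a \<Rightarrow> 'b) \<Rightarrow> 'a set \<Rightarrow> 'b set" where
  "iota \<psi> A = \<psi> ` A"

definition compl_map :: "'a graph \<Rightarrow> 'a set \<Rightarrow> 'a set" where
  "compl_map G A = fst G - A"

definition token_reconstruction :: "'b graph \<Rightarrow> nat \<Rightarrow> 'a graph \<Rightarrow> ('b \<Rightarrow> 'a set) \<Rightarrow> bool" where
  "token_reconstruction F k G' \<phi> \<longleftrightarrow> graph_iso F (token_graph k G') \<phi>"

definition equiv_reconstructions ::
  "'b graph \<Rightarrow> 'a graph \<Rightarrow> ('b \<Rightarrow> 'a set) \<Rightarrow> ('b \<Rightarrow> 'a set) \<Rightarrow> bool" where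
  "equiv_reconstructions F G \<phi> \<psi> \<longleftrightarrow>
     (\<exists>s. graph_iso G G s \<and>
        ((\<forall>x\<in>fst F. \<psi> x = iota s (\<phi> x)) \<or>
         (\<forall>x\<in>fst F. \<psi> x = compl_map G (iota s (\<phi> x)))))"

definition uniquely_reconstructible :: "'b graph \<Rightarrow> nat \<Rightarrow> 'a graph \<Rightarrow> bool" where
  "uniquely_reconstructible F k G \<longleftrightarrow>
     (\<forall>\<phi> \<psi>. token_reconstruction F k G \<phi> \<and> token_reconstruction F k G \<psi>
        \<longrightarrow> equiv_reconstructions F G \<phi> \<psi>)"

definition aut_group :: "'a graph \<Rightarrow> ('a \<Rightarrow> 'a) monoid" where
  "aut_group G = (BijGroup (fst G)) \<lparr> carrier := {f \<in> Bij (fst G). graph_iso G G f} \<rparr>"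

end

theory Submission
  imports Defs
begin

lemma carrier_aut: "carrier (aut_group H) = {f \<in> Bij (fst H). graph_iso H H f}"
  by (simp add: aut_group_def BijGroup_def)

lemma mult_aut: "f \<in> Bij (fst H) \<Longrightarrow> g \<in> Bij (fst H) \<Longrightarrow>
   f \<otimes>\<^bsub>aut_group H\<^esub> g = compose (fst H) f g"
  by (simp add: aut_group_def BijGroup_def)

lemma aut_closed:
  assumes "f \<in> carrier (aut_group H)" "g \<in> carrier (aut_group H)"
  shows "compose (fst H) f g \<in> carrier (aut_group H)"
proof -
  have f: "f \<in> Bij (fst H)" "graph_iso H H f" and g: "g \<in> Bij (fst H)" "graph_iso H H g"
    using assms by (auto simp: carrier_aut)
  have b: "compose (fst H) f g \<in> Bij (fst H)" using compose_Bij f g by blast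
  have gm: "\<And>u. u \<in> fst H \<Longrightarrow> g u \<in> fst H" using g unfolding Bij_def bij_betw_def by auto
  have "graph_iso H H (compose (fst H) f g)"
    unfolding graph_iso_def
  proof
    show "bij_betw (compose (fst H) f g) (fst H) (fst H)" using b by (simp add: Bij_def)
    show "\<forall>u\<in>fst H. \<forall>v\<in>fst H. ({u, v} \<in> snd H) = ({compose (fst H) f g u, compose (fst H) f g v} \<in> snd H)"
    proof (intro ballI)
      fix u v assume uv: "u \<in> fst H" "v \<in> fst H"
      have "({u, v} \<in> snd H) = ({g u, g v} \<in> snd H)" using g(2) uv unfolding graph_iso_def by blast
      also have "\<dots> = ({f (g u), f (g v)} \<in> snd H)" using f(2) uv gm unfolding graph_iso_def by blast
      finally show "({u, v} \<in> snd H) = ({compose (fst H) f g u, compose (fst H) f g v} \<in> snd H)"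
        using uv by (simp add: compose_def)
    qed
  qed
  then show ?thesis using b by (simp add: carrier_aut)
qed

lemma iso_flip:
  assumes h: "h \<in> iso G H" and cl: "\<And>x y. x \<in> carrier G \<Longrightarrow> y \<in> carrier G \<Longrightarrow> x \<otimes>\<^bsub>G\<^esub> y \<in> carrier G"
  shows "H \<cong> G"
proof -
  have h: "h \<in> hom G H" "bij_betw h (carrier G) (carrier H)"
    using assms by (auto simp add: iso_def bij_betw_inv_into)
  then have HG: "bij_betw (inv_into (carrier G) h) (carrier H) (carrier G)"
    by (simp add: bij_betw_inv_into)
  have "inv_into (carrier G) h \<in> hom H G"
    unfolding hom_def
  proof safe
    show *: "\<And>x. x \<in> carrier H \<Longrightarrow> inv_into (carrier G) h x \<in> carrier G"
      by (meson HG bij_betwE)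
    show "inv_into (carrier G) h (x \<otimes>\<^bsub>H\<^esub> y) = inv_into (carrier G) h x \<otimes>\<^bsub>G\<^esub> inv_into (carrier G) h y"
      if "x \<in> carrier H" "y \<in> carrier H" for x y
    proof (rule inv_into_f_eq)
      show "inj_on h (carrier G)"
        using bij_betw_def h(2) by blast
      show "inv_into (carrier G) h x \<otimes>\<^bsub>G\<^esub> inv_into (carrier G) h y \<in> carrier G"
        by (simp add: * cl that)
      show "h (inv_into (carrier G) h x \<otimes>\<^bsub>G\<^esub> inv_into (carrier G) h y) = x \<otimes>\<^bsub>H\<^esub> y"
        using h bij_betw_inv_into_right [of h] unfolding hom_def by (simp add: "*" that)
    qed
  qed
  then have "inv_into (carrier G) h \<in> iso H G"
    by (simp add: Group.iso_def bij_betw_inv_into h)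
  then show ?thesis by (rule is_isoI)
qed

lemma token_V: "fst (token_graph k G) = {A. A \<subseteq> fst G \<and> card A = k}"
  by (simp add: token_graph_def)

lemma token_edge:
  assumes "A \<in> fst (token_graph k G)" "B \<in> fst (token_graph k G)"
  shows "{A, B} \<in> snd (token_graph k G) \<longleftrightarrow> (A - B) \<union> (B - A) \<in> snd G"
proof
  assume "{A, B} \<in> snd (token_graph k G)"
  then obtain A' B' where e: "{A, B} = {A', B'}" "(A' - B') \<union> (B' - A') \<in> snd G"
    by (auto simp: token_graph_def)
  from e(1) have "(A = A' \<and> B = B') \<or> (A = B' \<and> B = A')" by (auto simp: doubleton_eq_iff)
  then show "(A - B) \<union> (B - A) \<in> snd G" using e(2) by (auto simp: Un_commute)
next
  assume "(A - B) \<union> (B - A) \<in> snd G"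
  then show "{A, B} \<in> snd (token_graph k G)" using assms by (auto simp: token_graph_def)
qed

lemma exists_kset:
  assumes "finite S" "P \<subseteq> S" "Q \<subseteq> S" "P \<inter> Q = {}" "card P \<le> k" "k + card Q \<le> card S"
  shows "\<exists>A. P \<subseteq> A \<and> A \<subseteq> S - Q \<and> card A = k"
proof -
  have fX: "finite P" "finite Q" using finite_subset[OF assms(2) assms(1)] finite_subset[OF assms(3) assms(1)] by auto
  have "card (S - Q - P) = card S - card Q - card P"
    by (metis Diff_subset_conv assms(1-4) card_Diff_subset fX Int_commute Diff_triv subset_Diff_insert Diff_mono Un_commute order_refl disjoint_iff subsetD subsetI DiffI)
  then have "k - card P \<le> card (S - Q - P)" using assms by linarith
  then obtain B where B: "B \<subseteq> S - Q - P" "card B = k - card P" "finite B"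
    by (meson obtain_subset_with_card_n)
  have "card (P \<union> B) = card P + card B" using B fX by (intro card_Un_disjoint) auto
  then show ?thesis using B assms by (intro exI[of _ "P \<union> B"]) auto
qed

definition Phi :: "'a graph \<Rightarrow> nat \<Rightarrow> ('a \<Rightarrow> 'a) \<times> int \<Rightarrow> 'a set \<Rightarrow> 'a set" where
  "Phi G k p = (\<lambda>A\<in>fst (token_graph k G). if snd p = 0 then fst p ` A else fst G - fst p ` A)"

lemma aut_bij: "s \<in> carrier (aut_group G) \<Longrightarrow> bij_betw s (fst G) (fst G)"
  by (simp add: carrier_aut Bij_def)

lemma aut_iso: "s \<in> carrier (aut_group G) \<Longrightarrow> graph_iso G G s"
  by (simp add: carrier_aut)

lemma img_edge:
  assumes "simple_graph G" "graph_iso G G s" "D \<subseteq> fst G"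
  shows "D \<in> snd G \<longleftrightarrow> s ` D \<in> snd G"
proof -
  have inj: "inj_on s (fst G)" using assms(2) by (simp add: graph_iso_def bij_betw_def)
  have iso: "\<And>u v. u \<in> fst G \<Longrightarrow> v \<in> fst G \<Longrightarrow> {u, v} \<in> snd G \<longleftrightarrow> {s u, s v} \<in> snd G"
    using assms(2) by (simp add: graph_iso_def)
  have cD: "card (s ` D) = card D" using inj assms(3) by (meson card_image inj_on_subset)
  show ?thesis
  proof
    assume "D \<in> snd G"
    then have "card D = 2" using assms(1) by (simp add: simple_graph_def)
    then obtain u v where "D = {u, v}" by (meson card_2_iff)
    then show "s ` D \<in> snd G" using iso assms(3) \<open>D \<in> snd G\<close> by auto
  next
    assume "s ` D \<in> snd G"
    then have "card D = 2" using assms(1) cD by (simp add: simple_graph_def)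
    then obtain u v where "D = {u, v}" by (meson card_2_iff)
    then show "D \<in> snd G" using iso assms(3) \<open>s ` D \<in> snd G\<close> by auto
  qed
qed

lemma symdiff_img:
  assumes "inj_on s V" "A \<subseteq> V" "B \<subseteq> V"
  shows "(s ` A - s ` B) \<union> (s ` B - s ` A) = s ` ((A - B) \<union> (B - A))"
proof -
  have "s ` (A - B) = s ` A - s ` B" using assms by (intro inj_on_image_set_diff) auto
  moreover have "s ` (B - A) = s ` B - s ` A" using assms by (intro inj_on_image_set_diff) auto
  ultimately show ?thesis by (simp add: image_Un)
qed

lemma symdiff_compl:
  assumes "A \<subseteq> V" "B \<subseteq> V"
  shows "((V - A) - (V - B)) \<union> ((V - B) - (V - A)) = (A - B) \<union> (B - A)"
  using assms by auto

lemma Phi_mem0: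
  assumes sg: "simple_graph G" and s: "s \<in> carrier (aut_group G)"
  shows "Phi G k (s, 0) \<in> carrier (aut_group (token_graph k G))"
proof -
  let ?V = "fst G" and ?W = "fst (token_graph k G)"
  have b: "bij_betw s ?V ?V" using aut_bij[OF s] .
  have inj: "inj_on s ?V" using b by (simp add: bij_betw_def)
  have im: "s ` ?V = ?V" using b by (simp add: bij_betw_def)
  have bw: "bij_betw (\<lambda>A. s ` A) ?W ?W"
    unfolding bij_betw_def
  proof
    show "inj_on (\<lambda>A. s ` A) ?W"
    proof (rule inj_onI)
      fix A B assume "A \<in> ?W" "B \<in> ?W" "s ` A = s ` B"
      then show "A = B" using inj by (simp add: token_V inj_on_image_eq_iff)
    qed
    show "(\<lambda>A. s ` A) ` ?W = ?W"
    proof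
      show "(\<lambda>A. s ` A) ` ?W \<subseteq> ?W"
      proof
        fix Z assume "Z \<in> (\<lambda>A. s ` A) ` ?W"
        then obtain A where A: "A \<in> ?W" "Z = s ` A" by blast
        have AV: "A \<subseteq> ?V" "card A = k" using A by (auto simp: token_V)
        have "card (s ` A) = card A" by (rule card_image[OF inj_on_subset[OF inj AV(1)]])
        moreover have "s ` A \<subseteq> ?V" using AV im by blast
        ultimately show "Z \<in> ?W" using A AV by (simp add: token_V)
      qed
      show "?W \<subseteq> (\<lambda>A. s ` A) ` ?W"
      proof
        fix B assume B: "B \<in> ?W"
        let ?A = "inv_into ?V s ` B"
        have BV: "B \<subseteq> ?V" using B by (simp add: token_V)
        have AV: "?A \<subseteq> ?V"
        proof
          fix x assume "x \<in> ?A"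
          then obtain y where y: "y \<in> B" "x = inv_into ?V s y" by auto
          then show "x \<in> ?V" using BV im inv_into_into[of y s ?V] by auto
        qed
        have sA: "s ` ?A = B" using BV im by (simp add: image_inv_into_cancel)
        have "card ?A = card (s ` ?A)" by (rule card_image[OF inj_on_subset[OF inj AV], symmetric])
        then have "card ?A = k" using B sA by (simp add: token_V)
        then have "?A \<in> ?W" using AV by (simp add: token_V)
        then show "B \<in> (\<lambda>A. s ` A) ` ?W" by (rule image_eqI[where f="\<lambda>A. s ` A", OF sA[symmetric]])
      qed
    qed
  qed
  have "bij_betw (Phi G k (s, 0)) ?W ?W = bij_betw (\<lambda>A. s ` A) ?W ?W"
    by (rule bij_betw_cong) (simp add: Phi_def)
  then have bw': "bij_betw (Phi G k (s, 0)) ?W ?W" using bw by simp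
  have ext: "Phi G k (s, 0) \<in> extensional ?W" by (simp add: Phi_def)
  have gi: "graph_iso (token_graph k G) (token_graph k G) (Phi G k (s, 0))"
    unfolding graph_iso_def
  proof (intro conjI ballI bw')
    fix A B assume AB: "A \<in> ?W" "B \<in> ?W"
    have AB': "A \<subseteq> ?V" "B \<subseteq> ?V" using AB by (auto simp: token_V)
    have m: "s ` A \<in> ?W" "s ` B \<in> ?W" using bij_betw_apply[OF bw AB(1)] bij_betw_apply[OF bw AB(2)] by auto
    have DV: "(A - B) \<union> (B - A) \<subseteq> ?V" using AB' by blast
    have "({A, B} \<in> snd (token_graph k G)) = ((A - B) \<union> (B - A) \<in> snd G)" by (rule token_edge[OF AB])
    also have "\<dots> = (s ` ((A - B) \<union> (B - A)) \<in> snd G)" by (rule img_edge[OF sg aut_iso[OF s] DV])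
    also have "\<dots> = ((s ` A - s ` B) \<union> (s ` B - s ` A) \<in> snd G)" using symdiff_img[OF inj AB'] by simp
    also have "\<dots> = ({s ` A, s ` B} \<in> snd (token_graph k G))" by (rule token_edge[OF m, symmetric])
    also have "{s ` A, s ` B} = {Phi G k (s, 0) A, Phi G k (s, 0) B}" using AB by (simp add: Phi_def)
    finally show "({A, B} \<in> snd (token_graph k G)) = ({Phi G k (s, 0) A, Phi G k (s, 0) B} \<in> snd (token_graph k G))" .
  qed
  show ?thesis using bw' ext gi by (simp add: carrier_aut Bij_def)
qed


lemma Phi0_maps:
  assumes sg: "simple_graph G" and s: "s \<in> carrier (aut_group G)" and A: "A \<in> fst (token_graph k G)"
  shows "s ` A \<in> fst (token_graph k G)"
proof -
  have "Phi G k (s, 0) A \<in> fst (token_graph k G)"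
    using Phi_mem0[OF sg s, of k] A by (auto simp: carrier_aut Bij_def bij_betw_def)
  then show ?thesis using A by (simp add: Phi_def)
qed

lemma compl_mem:
  assumes sg: "simple_graph G" and h: "2 * k = card (fst G)"
  shows "(\<lambda>A\<in>fst (token_graph k G). fst G - A) \<in> carrier (aut_group (token_graph k G))"
proof -
  let ?V = "fst G" and ?W = "fst (token_graph k G)"
  let ?C = "\<lambda>A\<in>?W. ?V - A"
  have fin: "finite ?V" using sg by (simp add: simple_graph_def)
  have cm: "\<And>A. A \<in> ?W \<Longrightarrow> ?V - A \<in> ?W"
  proof -
    fix A assume "A \<in> ?W"
    then have "A \<subseteq> ?V" "card A = k" by (auto simp: token_V)
    then have "card (?V - A) = k" using fin h by (simp add: card_Diff_subset finite_subset)
    then show "?V - A \<in> ?W" by (auto simp: token_V)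
  qed
  have bw: "bij_betw ?C ?W ?W"
    unfolding bij_betw_def
  proof
    show "inj_on ?C ?W" unfolding inj_on_def by (auto simp: token_V)
    show "?C ` ?W = ?W"
    proof
      show "?C ` ?W \<subseteq> ?W" using cm by auto
      show "?W \<subseteq> ?C ` ?W"
      proof
        fix B assume B: "B \<in> ?W"
        then have "B = ?C (?V - B)" using cm[OF B] by (auto simp: token_V)
        then show "B \<in> ?C ` ?W" using cm[OF B] by blast
      qed
    qed
  qed
  have gi: "graph_iso (token_graph k G) (token_graph k G) ?C"
    unfolding graph_iso_def
  proof (intro conjI ballI bw)
    fix A B assume AB: "A \<in> ?W" "B \<in> ?W"
    have AB': "A \<subseteq> ?V" "B \<subseteq> ?V" using AB by (auto simp: token_V)
    have "({A, B} \<in> snd (token_graph k G)) = ((A - B) \<union> (B - A) \<in> snd G)" by (rule token_edge[OF AB])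
    also have "\<dots> = (((?V - A) - (?V - B)) \<union> ((?V - B) - (?V - A)) \<in> snd G)" using symdiff_compl[OF AB'] by simp
    also have "\<dots> = ({?V - A, ?V - B} \<in> snd (token_graph k G))" by (rule token_edge[OF cm[OF AB(1)] cm[OF AB(2)], symmetric])
    finally show "({A, B} \<in> snd (token_graph k G)) = ({?C A, ?C B} \<in> snd (token_graph k G))"
      using AB by simp
  qed
  show ?thesis using bw gi by (simp add: carrier_aut Bij_def)
qed

lemma Phi_mem1:
  assumes sg: "simple_graph G" and h: "2 * k = card (fst G)" and s: "s \<in> carrier (aut_group G)"
  shows "Phi G k (s, 1) \<in> carrier (aut_group (token_graph k G))"
proof -
  let ?V = "fst G" and ?W = "fst (token_graph k G)"
  let ?C = "\<lambda>A\<in>?W. ?V - A"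
  have "Phi G k (s, 1) = compose ?W ?C (Phi G k (s, 0))"
    by (rule ext) (simp add: compose_def Phi_def Phi0_maps[OF sg s])
  then show ?thesis using aut_closed[OF compl_mem[OF sg h] Phi_mem0[OF sg s]] by simp
qed


lemma Phi_mult:
  assumes sg: "simple_graph G" and s: "s \<in> carrier (aut_group G)" and t: "t \<in> carrier (aut_group G)"
    and e: "e \<in> {0, 1}" and e': "e' \<in> {0, 1}"
    and tm: "Phi G k (t, e') \<in> carrier (aut_group (token_graph k G))"
  shows "Phi G k (compose (fst G) s t, (e + e') mod 2) = compose (fst (token_graph k G)) (Phi G k (s, e)) (Phi G k (t, e'))"
proof (rule ext)
  fix A
  let ?V = "fst G" and ?W = "fst (token_graph k G)"
  show "Phi G k (compose ?V s t, (e + e') mod 2) A = compose ?W (Phi G k (s, e)) (Phi G k (t, e')) A"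
  proof (cases "A \<in> ?W")
    case False
    then show ?thesis by (simp add: Phi_def compose_def)
  next
    case A: True
    have AV: "A \<subseteq> ?V" using A by (simp add: token_V)
    have bs: "bij_betw s ?V ?V" using aut_bij[OF s] .
    have bt: "bij_betw t ?V ?V" using aut_bij[OF t] .
    have tAV: "t ` A \<subseteq> ?V" using bt AV by (auto simp: bij_betw_def)
    have stAV: "s ` t ` A \<subseteq> ?V" using bs tAV by (auto simp: bij_betw_def)
    have c: "compose ?V s t ` A = s ` t ` A" using AV by (auto simp: compose_def)
    have m: "Phi G k (t, e') A \<in> ?W" using tm A by (auto simp: carrier_aut Bij_def bij_betw_def)
    have d: "s ` (?V - t ` A) = ?V - s ` t ` A"
    proof -
      have "s ` (?V - t ` A) = s ` ?V - s ` t ` A" using bs tAV by (intro inj_on_image_set_diff) (auto simp: bij_betw_def)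
      then show ?thesis using bs by (simp add: bij_betw_def)
    qed
    have lhs: "compose ?W (Phi G k (s, e)) (Phi G k (t, e')) A = Phi G k (s, e) (Phi G k (t, e') A)"
      using A by (simp add: compose_def)
    show ?thesis
      using e e' unfolding lhs
      using m A c d stAV by (auto simp: Phi_def)
  qed
qed


lemma inj_same:
  assumes sg: "simple_graph G" and k1: "1 \<le> k" and k2: "k + 1 \<le> card (fst G)"
    and s: "s \<in> carrier (aut_group G)" and t: "t \<in> carrier (aut_group G)"
    and eq: "\<And>A. A \<in> fst (token_graph k G) \<Longrightarrow> s ` A = t ` A"
  shows "s = t"
proof -
  let ?V = "fst G"
  have fin: "finite ?V" using sg by (simp add: simple_graph_def)
  have bs: "bij_betw s ?V ?V" using aut_bij[OF s] .
  have bt: "bij_betw t ?V ?V" using aut_bij[OF t] .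
  have pt: "\<forall>u\<in>?V. s u = t u"
  proof (rule ccontr)
    assume "\<not> (\<forall>u\<in>?V. s u = t u)"
    then obtain u where u: "u \<in> ?V" "s u \<noteq> t u" by blast
    have su: "s u \<in> ?V" using bs u by (auto simp: bij_betw_def)
    define w where "w = inv_into ?V t (s u)"
    have w: "w \<in> ?V" "t w = s u" using bt su unfolding w_def
      by (auto simp: bij_betw_def intro: inv_into_into f_inv_into_f)
    have wu: "w \<noteq> u" using w u by auto
    obtain A where A: "{u} \<subseteq> A" "A \<subseteq> ?V - {w}" "card A = k"
      using exists_kset[OF fin, of "{u}" "{w}" k] u w wu k1 k2 by auto
    have AW: "A \<in> fst (token_graph k G)" using A by (auto simp: token_V)
    have "s u \<in> t ` A" using eq[OF AW] A by auto
    then obtain x where x: "x \<in> A" "s u = t x" by auto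
    have "x = w" using x w A bt by (auto simp: bij_betw_def inj_on_def)
    then show False using x A by auto
  qed
  show ?thesis
    using pt s t by (intro extensionalityI[of _ ?V]) (auto simp: carrier_aut Bij_def)
qed

lemma inj_cross:
  assumes sg: "simple_graph G" and h: "2 * k = card (fst G)" and n4: "card (fst G) \<ge> 4"
    and s: "s \<in> carrier (aut_group G)" and t: "t \<in> carrier (aut_group G)"
    and eq: "\<And>A. A \<in> fst (token_graph k G) \<Longrightarrow> s ` A = fst G - t ` A"
  shows False
proof -
  let ?V = "fst G"
  have fin: "finite ?V" using sg by (simp add: simple_graph_def)
  have bs: "bij_betw s ?V ?V" using aut_bij[OF s] .
  have bt: "bij_betw t ?V ?V" using aut_bij[OF t] .
  have "?V \<noteq> {}" using n4 by auto
  then obtain u where u: "u \<in> ?V" by blast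
  have su: "s u \<in> ?V" using bs u by (auto simp: bij_betw_def)
  define w where "w = inv_into ?V t (s u)"
  have w: "w \<in> ?V" "t w = s u" using bt su unfolding w_def
    by (auto simp: bij_betw_def intro: inv_into_into f_inv_into_f)
  have c: "card {u, w} \<le> k" using h n4 by (simp add: card_insert_if)
  obtain A where A: "{u, w} \<subseteq> A" "A \<subseteq> ?V - {}" "card A = k"
    using exists_kset[OF fin, of "{u, w}" "{}" k] u w c h by auto
  have AW: "A \<in> fst (token_graph k G)" using A by (auto simp: token_V)
  have "s u \<in> s ` A" using A by auto
  moreover have "s u \<in> t ` A" using w A by (metis image_eqI insert_subset)
  ultimately show False using eq[OF AW] by auto
qed


lemma surj_Phi:
  assumes sg: "simple_graph G" and k1: "1 \<le> k" and k2: "k + 1 \<le> card (fst G)"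
    and ur: "uniquely_reconstructible (token_graph k G) k G"
    and psi: "\<psi> \<in> carrier (aut_group (token_graph k G))"
  shows "\<exists>s\<in>carrier (aut_group G). (\<psi> = Phi G k (s, 0)) \<or> (\<psi> = Phi G k (s, 1) \<and> 2 * k = card (fst G))"
proof -
  let ?V = "fst G" and ?W = "fst (token_graph k G)" and ?F = "token_graph k G"
  have fin: "finite ?V" using sg by (simp add: simple_graph_def)
  have "token_reconstruction ?F k G (\<lambda>x. x)"
    by (simp add: token_reconstruction_def graph_iso_def bij_betw_def)
  moreover have "token_reconstruction ?F k G \<psi>"
    using psi by (simp add: token_reconstruction_def carrier_aut)
  ultimately have "equiv_reconstructions ?F G (\<lambda>x. x) \<psi>"
    using ur by (simp add: uniquely_reconstructible_def)
  then obtain s where s: "graph_iso G G s"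
    and alt: "(\<forall>x\<in>?W. \<psi> x = iota s x) \<or> (\<forall>x\<in>?W. \<psi> x = compl_map G (iota s x))"
    by (auto simp: equiv_reconstructions_def)
  define s' where "s' = restrict s ?V"
  have bs': "bij_betw s' ?V ?V" using s unfolding s'_def graph_iso_def
    by (metis bij_betw_cong restrict_apply')
  have gs': "graph_iso G G s'" using s bs' unfolding s'_def graph_iso_def by auto
  have s'm: "s' \<in> carrier (aut_group G)" using bs' gs' by (simp add: carrier_aut Bij_def s'_def)
  have img: "\<And>A. A \<in> ?W \<Longrightarrow> s' ` A = s ` A" by (auto simp: s'_def token_V)
  have pext: "\<psi> \<in> extensional ?W" using psi by (simp add: carrier_aut Bij_def)
  have pW: "\<And>A. A \<in> ?W \<Longrightarrow> \<psi> A \<in> ?W" using psi by (auto simp: carrier_aut Bij_def bij_betw_def)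
  from alt show ?thesis
  proof
    assume a: "\<forall>x\<in>?W. \<psi> x = iota s x"
    have "\<psi> = Phi G k (s', 0)"
      by (rule extensionalityI[OF pext]) (auto simp: Phi_def a iota_def img)
    then show ?thesis using s'm by blast
  next
    assume a: "\<forall>x\<in>?W. \<psi> x = compl_map G (iota s x)"
    have e: "\<psi> = Phi G k (s', 1)"
      by (rule extensionalityI[OF pext]) (auto simp: Phi_def a iota_def img compl_map_def)
    obtain A where A: "{} \<subseteq> A" "A \<subseteq> ?V - {}" "card A = k"
      using exists_kset[OF fin, of "{}" "{}" k] k2 by auto
    have AW: "A \<in> ?W" using A by (simp add: token_V)
    have "card (?V - s' ` A) = card ?V - k"
    proof -
      have i: "inj_on s' ?V" "s' ` ?V = ?V" using bs' by (auto simp: bij_betw_def)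
      have sub: "s' ` A \<subseteq> ?V" using A i by auto
      have "card (s' ` A) = k" using A i by (metis Diff_empty card_image inj_on_subset)
      then show ?thesis using sub fin by (simp add: card_Diff_subset finite_subset)
    qed
    moreover have "card (?V - s' ` A) = k" using pW[OF AW] e AW by (simp add: Phi_def token_V)
    ultimately have "2 * k = card ?V" by linarith
    then show ?thesis using e s'm by blast
  qed
qed

lemma n2_case:
  assumes sg: "simple_graph G" and n2: "card (fst G) = 2" and k: "k = 1"
    and s: "s \<in> carrier (aut_group G)"
  shows "\<exists>t\<in>carrier (aut_group G). Phi G k (s, 1) = Phi G k (t, 0)"
proof -
  let ?V = "fst G" and ?W = "fst (token_graph k G)"
  obtain a b where ab: "?V = {a, b}" "a \<noteq> b" using n2 by (meson card_2_iff)
  define \<sigma> where "\<sigma> = (\<lambda>x\<in>?V. if x = a then b else a)"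
  have bsig: "bij_betw \<sigma> ?V ?V" unfolding bij_betw_def inj_on_def \<sigma>_def using ab by auto
  have gsig: "graph_iso G G \<sigma>"
    unfolding graph_iso_def
  proof (intro conjI bsig ballI)
    fix u v assume uv: "u \<in> ?V" "v \<in> ?V"
    show "({u, v} \<in> snd G) = ({\<sigma> u, \<sigma> v} \<in> snd G)"
    proof (cases "u = v")
      case True
      then show ?thesis using sg by (auto simp: simple_graph_def)
    next
      case False
      then have "{\<sigma> u, \<sigma> v} = {u, v}" using uv ab unfolding \<sigma>_def by auto
      then show ?thesis by simp
    qed
  qed
  have sigm: "\<sigma> \<in> carrier (aut_group G)" using bsig gsig by (simp add: carrier_aut Bij_def \<sigma>_def)
  define t where "t = compose ?V \<sigma> s"
  have tm: "t \<in> carrier (aut_group G)" unfolding t_def by (rule aut_closed[OF sigm s])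
  have bs: "bij_betw s ?V ?V" using aut_bij[OF s] .
  have "Phi G k (s, 1) = Phi G k (t, 0)"
  proof (rule ext)
    fix A show "Phi G k (s, 1) A = Phi G k (t, 0) A"
    proof (cases "A \<in> ?W")
      case False then show ?thesis by (simp add: Phi_def)
    next
      case True
      then have "A \<subseteq> ?V" "card A = 1" using k by (auto simp: token_V)
      then obtain x where x: "A = {x}" "x \<in> ?V" by (metis card_1_singletonE insert_subset)
      have sx: "s x \<in> ?V" using bs x by (auto simp: bij_betw_def)
      have "?V - {s x} = {\<sigma> (s x)}" using sx ab unfolding \<sigma>_def by auto
      moreover have "t ` A = {\<sigma> (s x)}" using x by (simp add: t_def compose_def)
      ultimately show ?thesis using True x by (simp add: Phi_def)
    qed
  qed
  then show ?thesis using tm by blast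
qed


lemma Phi_eval: "A \<in> fst (token_graph k G) \<Longrightarrow> Phi G k (s, e) A = (if e = 0 then s ` A else fst G - s ` A)"
  by (simp add: Phi_def)

lemma aut_img_sub: "s \<in> carrier (aut_group G) \<Longrightarrow> A \<in> fst (token_graph k G) \<Longrightarrow> s ` A \<subseteq> fst G"
  using aut_bij[of s G] by (auto simp: token_V bij_betw_def)

theorem proposition5:
  fixes G :: "'a graph" and k n :: nat
  assumes "simple_graph G"
    and "n = card (fst G)"
    and "1 \<le> k" and "k \<le> n - 1"
    and "uniquely_reconstructible (token_graph k G) k G"
  shows "if 2 * k = n \<and> n \<ge> 4
         then aut_group (token_graph k G) \<cong> aut_group G \<times>\<times> integer_mod_group 2
         else aut_group (token_graph k G) \<cong> aut_group G"
proof -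
  note sg = assms(1) and ur = assms(5)
  have k1: "1 \<le> k" using assms by simp
  have k2: "k + 1 \<le> card (fst G)" using assms by linarith
  let ?V = "fst G" and ?W = "fst (token_graph k G)" and ?F = "token_graph k G"
  have amult: "\<And>x y. x \<in> carrier (aut_group G) \<Longrightarrow> y \<in> carrier (aut_group G) \<Longrightarrow>
      x \<otimes>\<^bsub>aut_group G\<^esub> y = compose ?V x y"
  proof -
    fix x y assume "x \<in> carrier (aut_group G)" "y \<in> carrier (aut_group G)"
    then have "x \<in> Bij ?V" "y \<in> Bij ?V" unfolding carrier_aut by blast+
    then show "x \<otimes>\<^bsub>aut_group G\<^esub> y = compose ?V x y" by (rule mult_aut)
  qed
  have fmult: "\<And>x y. x \<in> carrier (aut_group ?F) \<Longrightarrow> y \<in> carrier (aut_group ?F) \<Longrightarrow>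
      x \<otimes>\<^bsub>aut_group ?F\<^esub> y = compose ?W x y"
  proof -
    fix x y assume "x \<in> carrier (aut_group ?F)" "y \<in> carrier (aut_group ?F)"
    then have "x \<in> Bij ?W" "y \<in> Bij ?W" unfolding carrier_aut by blast+
    then show "x \<otimes>\<^bsub>aut_group ?F\<^esub> y = compose ?W x y" by (rule mult_aut)
  qed
  have acl: "\<And>x y. x \<in> carrier (aut_group G) \<Longrightarrow> y \<in> carrier (aut_group G) \<Longrightarrow>
      x \<otimes>\<^bsub>aut_group G\<^esub> y \<in> carrier (aut_group G)"
  proof -
    fix x y assume xy: "x \<in> carrier (aut_group G)" "y \<in> carrier (aut_group G)"
    show "x \<otimes>\<^bsub>aut_group G\<^esub> y \<in> carrier (aut_group G)"
      unfolding amult[OF xy] by (rule aut_closed[OF xy])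
  qed
  have same: "\<And>s t. s \<in> carrier (aut_group G) \<Longrightarrow> t \<in> carrier (aut_group G) \<Longrightarrow>
      Phi G k (s, 0) = Phi G k (t, 0) \<Longrightarrow> s = t"
  proof -
    fix s t assume st: "s \<in> carrier (aut_group G)" "t \<in> carrier (aut_group G)" "Phi G k (s, 0) = Phi G k (t, 0)"
    show "s = t"
    proof (rule inj_same[OF sg k1 k2 st(1,2)])
      fix A assume A: "A \<in> ?W"
      have "Phi G k (s, 0) A = Phi G k (t, 0) A" using st(3) by simp
      then show "s ` A = t ` A" using A by (simp add: Phi_def)
    qed
  qed
  show ?thesis
  proof (cases "2 * k = n \<and> n \<ge> 4")
    case True
    then have h: "2 * k = card ?V" and n4: "card ?V \<ge> 4" using assms by auto
    let ?D = "aut_group G \<times>\<times> integer_mod_group 2"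
    have cD: "carrier ?D = carrier (aut_group G) \<times> {0, 1}"
      by (auto simp: carrier_integer_mod_group)
    have mem: "\<And>p. p \<in> carrier ?D \<Longrightarrow> Phi G k p \<in> carrier (aut_group ?F)"
      using Phi_mem0[OF sg] Phi_mem1[OF sg h] unfolding cD by auto
    have hom: "Phi G k \<in> hom ?D (aut_group ?F)"
    proof (rule homI)
      show "\<And>p. p \<in> carrier ?D \<Longrightarrow> Phi G k p \<in> carrier (aut_group ?F)" by (rule mem)
      fix p q assume p: "p \<in> carrier ?D" and q: "q \<in> carrier ?D"
      obtain s e where pe: "p = (s, e)" "s \<in> carrier (aut_group G)" "e \<in> {0, 1}" using p cD by auto
      obtain t e' where qe: "q = (t, e')" "t \<in> carrier (aut_group G)" "e' \<in> {0, 1}" using q cD by auto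
      have "p \<otimes>\<^bsub>?D\<^esub> q = (compose ?V s t, (e + e') mod 2)"
        using pe qe amult by simp
      then show "Phi G k (p \<otimes>\<^bsub>?D\<^esub> q) = Phi G k p \<otimes>\<^bsub>aut_group ?F\<^esub> Phi G k q"
        using Phi_mult[OF sg pe(2) qe(2) pe(3) qe(3) mem[OF q[unfolded qe(1)]]] fmult mem p q pe qe
        by simp
    qed
    have inj: "inj_on (Phi G k) (carrier ?D)"
    proof (rule inj_onI)
      fix p q assume p: "p \<in> carrier ?D" and q: "q \<in> carrier ?D" and eq: "Phi G k p = Phi G k q"
      obtain s e where pe: "p = (s, e)" "s \<in> carrier (aut_group G)" "e \<in> {0, 1}" using p cD by auto
      obtain t e' where qe: "q = (t, e')" "t \<in> carrier (aut_group G)" "e' \<in> {0, 1}" using q cD by auto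
      have ev: "\<And>A. A \<in> ?W \<Longrightarrow> (if e = 0 then s ` A else ?V - s ` A) = (if e' = 0 then t ` A else ?V - t ` A)"
      proof -
        fix A assume A: "A \<in> ?W"
        have "Phi G k (s, e) A = Phi G k (t, e') A" using eq pe(1) qe(1) by simp
        then show "(if e = 0 then s ` A else ?V - s ` A) = (if e' = 0 then t ` A else ?V - t ` A)"
          using A by (simp only: Phi_eval)
      qed
      have sub: "\<And>A. A \<in> ?W \<Longrightarrow> s ` A \<subseteq> ?V \<and> t ` A \<subseteq> ?V"
        using aut_img_sub pe qe by blast
      show "p = q"
      proof (cases "e = 0")
        case e0: True
        show ?thesis
        proof (cases "e' = 0")
          case True
          then have "s = t" using inj_same[OF sg k1 k2 pe(2) qe(2)] ev e0 by auto
          then show ?thesis using pe qe e0 True by simp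
        next
          case False
          then have "\<And>A. A \<in> ?W \<Longrightarrow> s ` A = ?V - t ` A" using ev e0 by auto
          then show ?thesis using inj_cross[OF sg h n4 pe(2) qe(2)] by blast
        qed
      next
        case e1: False
        show ?thesis
        proof (cases "e' = 0")
          case True
          have "\<And>A. A \<in> ?W \<Longrightarrow> t ` A = ?V - s ` A"
          proof -
            fix A assume A: "A \<in> ?W"
            have "?V - s ` A = t ` A" using ev[OF A] e1 True by simp
            then show "t ` A = ?V - s ` A" by simp
          qed
          then show ?thesis using inj_cross[OF sg h n4 qe(2) pe(2)] by blast
        next
          case False
          have "\<And>A. A \<in> ?W \<Longrightarrow> s ` A = t ` A"
          proof -
            fix A assume A: "A \<in> ?W"
            have d: "?V - s ` A = ?V - t ` A" using ev[OF A] e1 False by simp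
            have "s ` A = ?V - (?V - s ` A)" using sub[OF A] by auto
            also have "\<dots> = ?V - (?V - t ` A)" using d by simp
            also have "\<dots> = t ` A" using sub[OF A] by auto
            finally show "s ` A = t ` A" .
          qed
          then have "s = t" using inj_same[OF sg k1 k2 pe(2) qe(2)] by auto
          then show ?thesis using pe qe e1 False by simp
        qed
      qed
    qed
    have img: "Phi G k ` carrier ?D = carrier (aut_group ?F)"
    proof
      show "Phi G k ` carrier ?D \<subseteq> carrier (aut_group ?F)" using mem by auto
      show "carrier (aut_group ?F) \<subseteq> Phi G k ` carrier ?D"
      proof
        fix \<psi> assume "\<psi> \<in> carrier (aut_group ?F)"
        then obtain s where "s \<in> carrier (aut_group G)" "\<psi> = Phi G k (s, 0) \<or> \<psi> = Phi G k (s, 1)"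
          using surj_Phi[OF sg k1 k2 ur] by blast
        then show "\<psi> \<in> Phi G k ` carrier ?D" unfolding cD by auto
      qed
    qed
    have iso: "Phi G k \<in> iso ?D (aut_group ?F)"
      using hom inj img by (simp add: iso_def bij_betw_def)
    have cl: "\<And>x y. x \<in> carrier ?D \<Longrightarrow> y \<in> carrier ?D \<Longrightarrow> x \<otimes>\<^bsub>?D\<^esub> y \<in> carrier ?D"
      using acl by (auto simp: carrier_integer_mod_group)
    show ?thesis unfolding if_P[OF True] by (rule iso_flip[OF iso cl])
  next
    case False
    let ?h = "\<lambda>s. Phi G k (s, 0)"
    have hom: "?h \<in> hom (aut_group G) (aut_group ?F)"
    proof (rule homI)
      show "\<And>s. s \<in> carrier (aut_group G) \<Longrightarrow> ?h s \<in> carrier (aut_group ?F)" using Phi_mem0[OF sg] by blast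
      fix s t assume s: "s \<in> carrier (aut_group G)" and t: "t \<in> carrier (aut_group G)"
      show "?h (s \<otimes>\<^bsub>aut_group G\<^esub> t) = ?h s \<otimes>\<^bsub>aut_group ?F\<^esub> ?h t"
        using Phi_mult[OF sg s t, of 0 0, OF _ _ Phi_mem0[OF sg t]] amult[OF s t] fmult Phi_mem0[OF sg] s t
        by simp
    qed
    have inj: "inj_on ?h (carrier (aut_group G))" using same by (meson inj_onI)
    have img: "?h ` carrier (aut_group G) = carrier (aut_group ?F)"
    proof
      show "?h ` carrier (aut_group G) \<subseteq> carrier (aut_group ?F)" using Phi_mem0[OF sg] by blast
      show "carrier (aut_group ?F) \<subseteq> ?h ` carrier (aut_group G)"
      proof
        fix \<psi> assume "\<psi> \<in> carrier (aut_group ?F)"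
        then obtain s where s: "s \<in> carrier (aut_group G)"
          and alt: "\<psi> = Phi G k (s, 0) \<or> (\<psi> = Phi G k (s, 1) \<and> 2 * k = card ?V)"
          using surj_Phi[OF sg k1 k2 ur] by blast
        show "\<psi> \<in> ?h ` carrier (aut_group G)"
        proof (cases "\<psi> = Phi G k (s, 0)")
          case True then show ?thesis using s by blast
        next
          case F: False
          then have e: "\<psi> = Phi G k (s, 1)" "2 * k = card ?V" using alt by auto
          have n4': "\<not> 4 \<le> card ?V" using False e(2) assms(2) by auto
          then have "card ?V = 2 \<and> k = 1" using e(2) k1 by presburger
          then have "card ?V = 2" "k = 1" by auto
          then obtain t where "t \<in> carrier (aut_group G)" "Phi G k (s, 1) = Phi G k (t, 0)"
            using n2_case[OF sg _ _ s] by blast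
          then show ?thesis using e by blast
        qed
      qed
    qed
    have iso: "?h \<in> iso (aut_group G) (aut_group ?F)"
      using hom inj img by (simp add: iso_def bij_betw_def)
    show ?thesis unfolding if_not_P[OF False] by (rule iso_flip[OF iso acl])
  qed
qed

end
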